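(* Let $0\leq B<1$ and $\Delta\geq3$, and set $d=\Delta-1$. Suppose $R_1,\dots,R_q,C_1,\dots,C_q$ solve the system \[R_i\propto\Big(BC_i+\sum_{j\neq i}C_j\Big)^{d},\qquad C_j\propto\Big(BR_j+\sum_{i\neq j}R_i\Big)^{d}\qquad(i,j\in[q])\] (proportionality constants independent of $i$, resp. $j$) and satisfy $R_i\propto C_i$ for all $i\in[q]$. Then $R_1=\dots=R_q$ and $C_1=\dots=C_q$.
   Context: This system is the tree recursion (fixpoint) system for the antiferromagnetic $q$-state Potts model with parameter $B$ (interaction matrix with diagonal entries $B$ and off-diagonal entries $1$); $B=0$ corresponds to $q$-colorings. *)

theory Defs
  imports Complex_Main
begin

definition potts_map :: "nat \<Rightarrow> real \<Rightarrow> nat \<Rightarrow> (nat \<Rightarrow> real) \<Rightarrow> nat \<Rightarrow> real" where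
  "potts_map q B d x i = (B * x i + (\<Sum>j\<in>{..<q} - {i}. x j)) ^ d"

definition propto :: "nat \<Rightarrow> (nat \<Rightarrow> real) \<Rightarrow> (nat \<Rightarrow> real) \<Rightarrow> bool" where
  "propto q u v \<longleftrightarrow> (\<exists>c. \<forall>i<q. u i = c * v i)"

end

theory Submission
  imports Defs
begin

lemma base_eq:
  fixes x :: "nat \<Rightarrow> real" and q i :: nat
  assumes "i < q"
  shows "B * x i + (\<Sum>j\<in>{..<q} - {i}. x j) = (\<Sum>j<q. x j) - (1 - B) * x i"
proof -
  have "(\<Sum>j<q. x j) = x i + (\<Sum>j\<in>{..<q} - {i}. x j)"
    using assms sum.remove[of "{..<q}" i x] by auto
  thus ?thesis by (simp add: algebra_simps)
qed

theorem lemma25: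
  fixes q \<Delta> :: nat and B :: real and R C :: "nat \<Rightarrow> real"
  assumes "0 \<le> B" and "B < 1" and "\<Delta> \<ge> 3"
    and "\<forall>i<q. R i > 0" and "\<forall>i<q. C i > 0"
    and "propto q R (potts_map q B (\<Delta> - 1) C)"
    and "propto q C (potts_map q B (\<Delta> - 1) R)"
    and "propto q R C"
  shows "(\<forall>i<q. \<forall>j<q. R i = R j) \<and> (\<forall>i<q. \<forall>j<q. C i = C j)"
proof -
  define d where "d = \<Delta> - 1"
  obtain a where a: "\<forall>i<q. R i = a * C i" using assms(8) unfolding propto_def by blast
  obtain c2 where c2: "\<forall>i<q. C i = c2 * potts_map q B d R i"
    using assms(7) unfolding propto_def d_def by blast
  define b where "b i = B * C i + (\<Sum>j\<in>{..<q} - {i}. C j)" for i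
  define k where "k = c2 * a ^ d"
  have Ck: "C i = k * b i ^ d" if "i < q" for i
  proof -
    have s: "(\<Sum>j\<in>{..<q} - {i}. R j) = a * (\<Sum>j\<in>{..<q} - {i}. C j)"
      using a by (simp add: sum_distrib_left)
    have "potts_map q B d R i = (a * b i) ^ d"
      unfolding potts_map_def b_def s using a that by (simp add: algebra_simps)
    thus ?thesis using c2 that by (simp add: k_def power_mult_distrib)
  qed
  have bnn: "b i \<ge> 0" if "i < q" for i
  proof -
    have "(\<Sum>j\<in>{..<q} - {i}. C j) \<ge> 0" using assms(5) by (intro sum_nonneg) auto
    moreover have "B * C i \<ge> 0" using assms(1,5) that by (simp add: less_imp_le)
    ultimately show ?thesis by (simp add: b_def)
  qed
  have noless: "\<not> C i < C j" if "i < q" "j < q" for i j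
  proof
    assume lt: "C i < C j"
    have "b i = (\<Sum>j<q. C j) - (1 - B) * C i" "b j = (\<Sum>j<q. C j) - (1 - B) * C j"
      using base_eq that unfolding b_def by blast+
    moreover have "(1 - B) * C i < (1 - B) * C j"
      using lt assms(2) by (intro mult_strict_left_mono) auto
    ultimately have "b j \<le> b i" by linarith
    hence p: "b j ^ d \<le> b i ^ d" using bnn that by (intro power_mono) auto
    have pj: "b j ^ d \<ge> 0" using bnn that by simp
    have "k > 0"
    proof (rule ccontr)
      assume "\<not> k > 0"
      hence "k * b j ^ d \<le> 0" using pj by (simp add: mult_nonpos_nonneg)
      thus False using Ck[OF that(2)] assms(5) that by auto
    qed
    hence "k * b j ^ d \<le> k * b i ^ d" using p by simp
    thus False using Ck that lt by auto
  qed
  have Ceq: "\<forall>i<q. \<forall>j<q. C i = C j"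
  proof (intro allI impI)
    fix i j assume "i < q" "j < q"
    thus "C i = C j" using noless[of i j] noless[of j i] by linarith
  qed
  moreover have "\<forall>i<q. \<forall>j<q. R i = R j"
  proof (intro allI impI)
    fix i j assume ij: "i < q" "j < q"
    have "R i = a * C i" "R j = a * C j" using a ij by blast+
    thus "R i = R j" using Ceq ij by metis
  qed
  ultimately show ?thesis by blast
qed

end
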